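(* Let $r\geq 2$ and let $G$ be an $r$-uniform hypergraph with vertex set $\{1,\ldots,n\}$ and $m$ edges. If $\mathbf{x}\in\Delta^{n-1}$ is an eigenvector to $\mu(G)$, then \[ \mu(G)\leq m\,\sigma(\mathbf{x})^r. \]
   Context: $\Delta^{n-1}=\{\mathbf{x}\in\mathbb{R}^n: x_i\geq0 \text{ for all } i,\ \sum_i x_i=1\}$. For $G$ with edge set $E$, define \[ P_G(\mathbf{x})=\sum_{\{i_1,\ldots,i_r\}\in E}x_{i_1}\cdots x_{i_r} \qquad\text{and}\qquad \mu(G)=\max_{\mathbf{x}\in\Delta^{n-1}}P_G(\mathbf{x}). \] A vector $\mathbf{x}\in\Delta^{n-1}$ with $P_G(\mathbf{x})=\mu(G)$ is called an eigenvector to $\mu(G)$. $\sigma(\mathbf{x})=x_1^{x_1}\cdots x_n^{x_n}$, with the convention $0^0=1$. *)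

theory Defs
  imports "HOL-Analysis.Analysis"
begin

definition uniform_hypergraph :: "nat \<Rightarrow> nat \<Rightarrow> nat set set \<Rightarrow> bool" where
  "uniform_hypergraph r n E \<longleftrightarrow> (\<forall>e\<in>E. e \<subseteq> {1..n} \<and> card e = r)"

definition std_simplex :: "nat \<Rightarrow> (nat \<Rightarrow> real) set" where
  "std_simplex n = {x. (\<forall>i\<in>{1..n}. x i \<ge> 0) \<and> (\<Sum>i\<in>{1..n}. x i) = 1}"

definition PG :: "nat set set \<Rightarrow> (nat \<Rightarrow> real) \<Rightarrow> real" where
  "PG E x = (\<Sum>e\<in>E. \<Prod>i\<in>e. x i)"

definition mu :: "nat \<Rightarrow> nat set set \<Rightarrow> real" where
  "mu n E = (SUP x\<in>std_simplex n. PG E x)"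

definition eigenvector :: "nat \<Rightarrow> nat set set \<Rightarrow> (nat \<Rightarrow> real) \<Rightarrow> bool" where
  "eigenvector n E x \<longleftrightarrow> x \<in> std_simplex n \<and> PG E x = mu n E"

definition sigma :: "nat \<Rightarrow> (nat \<Rightarrow> real) \<Rightarrow> real" where
  "sigma n x = (\<Prod>i\<in>{1..n}. if x i = 0 then 1 else x i powr x i)"

end

theory Submission
  imports Defs
begin

definition Gd :: "nat set set \<Rightarrow> (nat \<Rightarrow> real) \<Rightarrow> nat \<Rightarrow> real" where
  "Gd E x i = (\<Sum>e\<in>E. if i \<in> e then (\<Prod>k\<in>e-{i}. x k) else 0)"

lemma simplex_le1:
  assumes "x \<in> std_simplex n" "k \<in> {1..n}"
  shows "x k \<le> 1"
proof -
  have nn: "\<forall>i\<in>{1..n}. x i \<ge> 0" and s: "(\<Sum>i\<in>{1..n}. x i) = 1"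
    using assms(1) by (auto simp: std_simplex_def)
  have "x k \<le> (\<Sum>i\<in>{1..n}. x i)"
    using member_le_sum[of k "{1..n}" x] nn assms(2) by auto
  with s show ?thesis by simp
qed

lemma PG_bound:
  assumes "uniform_hypergraph r n E" "y \<in> std_simplex n"
  shows "PG E y \<le> real (card E)"
proof -
  have "PG E y \<le> (\<Sum>e\<in>E. 1)"
    unfolding PG_def
  proof (rule sum_mono)
    fix e assume "e \<in> E"
    then have "e \<subseteq> {1..n}" using assms(1) by (auto simp: uniform_hypergraph_def)
    then show "(\<Prod>i\<in>e. y i) \<le> 1"
      using assms(2) simplex_le1[OF assms(2)]
      by (intro prod_le_1) (auto simp: std_simplex_def)
  qed
  then show ?thesis by simp
qed

lemma finE:
  assumes "uniform_hypergraph r n E"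
  shows "finite E"
proof -
  have "E \<subseteq> Pow {1..n}" using assms by (auto simp: uniform_hypergraph_def)
  then show ?thesis by (rule finite_subset) simp
qed

lemma PG_le_mu:
  assumes "uniform_hypergraph r n E" "y \<in> std_simplex n"
  shows "PG E y \<le> mu n E"
  unfolding mu_def
proof (rule cSUP_upper[OF assms(2)])
  show "bdd_above (PG E ` std_simplex n)"
    using PG_bound[OF assms(1)] by (auto intro!: bdd_aboveI[where M="real (card E)"])
qed

lemma G_eq:
  assumes U: "uniform_hypergraph r n E" and ev: "eigenvector n E x"
    and i: "i \<in> {1..n}" and j: "j \<in> {1..n}" and xi: "x i > 0" and xj: "x j > 0"
  shows "Gd E x i = Gd E x j"
proof (cases "i = j")
  case True then show ?thesis by simp
next
  case False
  have fin: "finite E" using finE[OF U] .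
  have fine: "finite e" if "e \<in> E" for e
    using U that by (auto simp: uniform_hypergraph_def intro: finite_subset)
  define c where "c = (\<lambda>k. if k = i then 1 else if k = j then -1 else (0::real))"
  define f where "f = (\<lambda>t. PG E (\<lambda>k. x k + t * c k))"
  have der: "(f has_field_derivative
      (\<Sum>e\<in>E. \<Sum>k\<in>e. c k * (\<Prod>l\<in>e-{k}. x l + 0 * c l))) (at 0)"
    unfolding f_def PG_def
  proof (intro DERIV_sum)
    fix e assume "e \<in> E"
    have "\<And>k. ((\<lambda>t. x k + t * c k) has_field_derivative c k) (at 0)"
      by (auto intro!: derivative_eq_intros)
    then show "((\<lambda>t. \<Prod>k\<in>e. x k + t * c k) has_field_derivative
      (\<Sum>k\<in>e. c k * (\<Prod>l\<in>e-{k}. x l + 0 * c l))) (at 0)"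
      by (rule has_field_derivative_prod)
  qed
  have inner: "(\<Sum>k\<in>e. c k * (\<Prod>l\<in>e-{k}. x l + 0 * c l)) =
      (if i \<in> e then (\<Prod>l\<in>e-{i}. x l) else 0) - (if j \<in> e then (\<Prod>l\<in>e-{j}. x l) else 0)"
    if "e \<in> E" for e
  proof -
    have "(\<Sum>k\<in>e. c k * (\<Prod>l\<in>e-{k}. x l + 0 * c l)) =
       (\<Sum>k\<in>e. (if k = i then (\<Prod>l\<in>e-{k}. x l) else 0) - (if k = j then (\<Prod>l\<in>e-{k}. x l) else 0))"
      using False by (intro sum.cong) (auto simp: c_def)
    also have "\<dots> = (if i \<in> e then (\<Prod>l\<in>e-{i}. x l) else 0) - (if j \<in> e then (\<Prod>l\<in>e-{j}. x l) else 0)"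
      using fine[OF that] by (simp add: sum_subtractf sum.delta')
    finally show ?thesis .
  qed
  have dval: "(\<Sum>e\<in>E. \<Sum>k\<in>e. c k * (\<Prod>l\<in>e-{k}. x l + 0 * c l)) = Gd E x i - Gd E x j"
    unfolding Gd_def using inner by (simp add: sum_subtractf[symmetric])
  have xs: "x \<in> std_simplex n" and mux: "PG E x = mu n E"
    using ev by (auto simp: eigenvector_def)
  have loc: "\<forall>y. \<bar>0 - y\<bar> < min (x i) (x j) \<longrightarrow> f y \<le> f 0"
  proof (intro allI impI)
    fix t assume t: "\<bar>0 - t\<bar> < min (x i) (x j)"
    have ins: "(\<lambda>k. x k + t * c k) \<in> std_simplex n"
    proof -
      have "\<forall>k\<in>{1..n}. x k + t * c k \<ge> 0"
        using xs t by (auto simp: std_simplex_def c_def)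
      moreover have "(\<Sum>k\<in>{1..n}. x k + t * c k) = 1"
      proof -
        have "(\<Sum>k\<in>{1..n}. c k) = (\<Sum>k\<in>{1..n}. (if k = i then 1 else 0) - (if k = j then 1 else (0::real)))"
          using False by (intro sum.cong) (auto simp: c_def)
        also have "\<dots> = 0" using i j by (simp add: sum_subtractf sum.delta')
        finally have "(\<Sum>k\<in>{1..n}. c k) = 0" .
        then show ?thesis using xs by (simp add: sum.distrib sum_distrib_left[symmetric] std_simplex_def)
      qed
      ultimately show ?thesis by (simp add: std_simplex_def)
    qed
    have "f t \<le> mu n E" unfolding f_def by (rule PG_le_mu[OF U ins])
    moreover have "f 0 = mu n E" using mux by (simp add: f_def)
    ultimately show "f t \<le> f 0" by simp
  qed
  have "Gd E x i - Gd E x j = 0"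
    using DERIV_local_max[OF der _ loc] xi xj dval by simp
  then show ?thesis by simp
qed

lemma q_eq:
  assumes U: "uniform_hypergraph r n E" and ev: "eigenvector n E x"
  shows "\<forall>i\<in>{1..n}. (\<Sum>e\<in>E. if i \<in> e then (\<Prod>k\<in>e. x k) else 0) = r * mu n E * x i"
proof -
  have fin: "finite E" using finE[OF U] .
  have sub: "e \<subseteq> {1..n}" and ce: "card e = r" if "e \<in> E" for e
    using U that by (auto simp: uniform_hypergraph_def)
  have fine: "finite e" if "e \<in> E" for e
    using sub[OF that] by (auto intro: finite_subset)
  have xs: "x \<in> std_simplex n" and mux: "PG E x = mu n E"
    using ev by (auto simp: eigenvector_def)
  have nn: "\<forall>i\<in>{1..n}. x i \<ge> 0" and s1: "(\<Sum>i\<in>{1..n}. x i) = 1"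
    using xs by (auto simp: std_simplex_def)
  have qG: "(\<Sum>e\<in>E. if i \<in> e then (\<Prod>k\<in>e. x k) else 0) = x i * Gd E x i" for i
    unfolding Gd_def sum_distrib_left
    by (intro sum.cong refl) (auto simp: fine prod.remove)
  have euler: "(\<Sum>i\<in>{1..n}. x i * Gd E x i) = r * PG E x"
  proof -
    have "(\<Sum>i\<in>{1..n}. x i * Gd E x i) = (\<Sum>i\<in>{1..n}. \<Sum>e\<in>E. if i \<in> e then (\<Prod>k\<in>e. x k) else 0)"
      using qG by simp
    also have "\<dots> = (\<Sum>e\<in>E. \<Sum>i\<in>{1..n}. if i \<in> e then (\<Prod>k\<in>e. x k) else 0)"
      by (rule sum.swap)
    also have "\<dots> = (\<Sum>e\<in>E. r * (\<Prod>k\<in>e. x k))"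
    proof (intro sum.cong refl)
      fix e assume e: "e \<in> E"
      have "(\<Sum>i\<in>{1..n}. if i \<in> e then (\<Prod>k\<in>e. x k) else 0) = (\<Sum>i\<in>{i\<in>{1..n}. i \<in> e}. (\<Prod>k\<in>e. x k))"
        by (rule sum.inter_filter[symmetric]) simp
      also have "{i\<in>{1..n}. i \<in> e} = e" using sub[OF e] by auto
      finally show "(\<Sum>i\<in>{1..n}. if i \<in> e then (\<Prod>k\<in>e. x k) else 0) = r * (\<Prod>k\<in>e. x k)"
        using ce[OF e] by simp
    qed
    also have "\<dots> = r * PG E x" by (simp add: PG_def sum_distrib_left)
    finally show ?thesis .
  qed
  obtain i0 where i0: "i0 \<in> {1..n}" "x i0 > 0"
  proof -
    have "\<exists>i\<in>{1..n}. x i \<noteq> 0"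
    proof (rule ccontr)
      assume "\<not> ?thesis"
      then have "(\<Sum>i\<in>{1..n}. x i) = 0" by simp
      with s1 show False by simp
    qed
    then show ?thesis using nn that by force
  qed
  define c where "c = Gd E x i0"
  have Gc: "x i * Gd E x i = x i * c" if "i \<in> {1..n}" for i
  proof (cases "x i = 0")
    case False
    then have "x i > 0" using nn that by force
    then show ?thesis using G_eq[OF U ev that i0(1) _ i0(2)] by (simp add: c_def)
  qed simp
  have "(\<Sum>i\<in>{1..n}. x i * Gd E x i) = (\<Sum>i\<in>{1..n}. x i * c)"
    using Gc by (intro sum.cong) auto
  also have "\<dots> = c" using s1 by (simp add: sum_distrib_right[symmetric])
  finally have "(\<Sum>i\<in>{1..n}. x i * Gd E x i) = c" .
  then have cval: "c = r * mu n E" using euler mux by simp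
  show ?thesis
  proof
    fix i assume i: "i \<in> {1..n}"
    show "(\<Sum>e\<in>E. if i \<in> e then (\<Prod>k\<in>e. x k) else 0) = r * mu n E * x i"
      using qG[of i] Gc[OF i] cval by simp
  qed
qed

theorem lemma8:
  fixes r n :: nat and E :: "nat set set" and x :: "nat \<Rightarrow> real"
  assumes "r \<ge> 2"
    and "uniform_hypergraph r n E"
    and "eigenvector n E x"
  shows "mu n E \<le> real (card E) * sigma n x ^ r"
proof -
  note U = assms(2) and ev = assms(3)
  define P where "P = (\<lambda>e. \<Prod>k\<in>e. x k)"
  have fin: "finite E" using finE[OF U] .
  have sub: "e \<subseteq> {1..n}" if "e \<in> E" for e
    using U that by (auto simp: uniform_hypergraph_def)
  have fine: "finite e" if "e \<in> E" for e
    using sub[OF that] by (auto intro: finite_subset)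
  have xs: "x \<in> std_simplex n" and mux: "PG E x = mu n E"
    using ev by (auto simp: eigenvector_def)
  have nn: "\<forall>i\<in>{1..n}. x i \<ge> 0"
    using xs by (auto simp: std_simplex_def)
  have Pnn: "P e \<ge> 0" if "e \<in> E" for e
    unfolding P_def using sub[OF that] nn by (intro prod_nonneg) auto
  define T where "T = {i\<in>{1..n}. x i > 0}"
  define L where "L = (\<Sum>i\<in>T. x i * ln (x i))"
  have sig: "sigma n x = (\<Prod>i\<in>T. x i powr x i)"
  proof -
    have "sigma n x = (\<Prod>i\<in>{1..n}. if x i = 0 then 1 else x i powr x i)"
      by (simp add: sigma_def)
    also have "\<dots> = (\<Prod>i\<in>T. if x i = 0 then 1 else x i powr x i)"
      using nn by (intro prod.mono_neutral_right) (auto simp: T_def)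
    also have "\<dots> = (\<Prod>i\<in>T. x i powr x i)"
      by (intro prod.cong) (auto simp: T_def)
    finally show ?thesis .
  qed
  have sigpos: "sigma n x > 0" unfolding sig by (intro prod_pos) (auto simp: T_def)
  have lnsig: "ln (sigma n x) = L"
    unfolding sig L_def by (subst ln_prod) (auto simp: T_def ln_powr)
  show ?thesis
  proof (cases "mu n E \<le> 0")
    case True
    then show ?thesis using sigpos by (smt (verit) of_nat_0_le_iff mult_nonneg_nonneg zero_le_power)
  next
    case False
    then have mupos: "mu n E > 0" by simp
    define S where "S = {e\<in>E. P e > 0}"
    have finS: "finite S" using fin by (simp add: S_def)
    have muS: "mu n E = (\<Sum>e\<in>S. P e)"
    proof -
      have "mu n E = (\<Sum>e\<in>E. P e)" using mux by (simp add: PG_def P_def)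
      also have "\<dots> = (\<Sum>e\<in>S. P e)"
        using Pnn fin by (intro sum.mono_neutral_right) (auto simp: S_def less_le)
      finally show ?thesis .
    qed
    define k where "k = card S"
    have Sne: "S \<noteq> {}" using muS mupos by auto
    have kpos: "k > 0" using Sne finS by (simp add: k_def card_gt_0_iff)
    have kle: "k \<le> card E" unfolding k_def S_def using fin by (intro card_mono) auto
    have a1: "P e * ln (mu n E / (P e * k)) \<le> mu n E / k - P e" if "e \<in> S" for e
    proof -
      have pe: "P e > 0" using that by (simp add: S_def)
      have "ln (mu n E / (P e * k)) \<le> mu n E / (P e * k) - 1"
        using pe kpos mupos by (intro ln_le_minus_one) simp
      then have "P e * ln (mu n E / (P e * k)) \<le> P e * (mu n E / (P e * k) - 1)"
        using pe by (simp add: mult_left_mono)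
      also have "\<dots> = mu n E / k - P e" using pe by (simp add: field_simps)
      finally show ?thesis .
    qed
    have a2: "(\<Sum>e\<in>S. P e * ln (mu n E / (P e * k))) \<le> 0"
    proof -
      have "(\<Sum>e\<in>S. P e * ln (mu n E / (P e * k))) \<le> (\<Sum>e\<in>S. mu n E / k - P e)"
        using a1 by (rule sum_mono)
      also have "\<dots> = 0" using kpos by (simp add: sum_subtractf muS[symmetric] k_def)
      finally show ?thesis .
    qed
    have a3: "(\<Sum>e\<in>S. P e * ln (mu n E / (P e * k))) =
        mu n E * ln (mu n E) - (\<Sum>e\<in>S. P e * ln (P e)) - mu n E * ln k"
    proof -
      have "(\<Sum>e\<in>S. P e * ln (mu n E / (P e * k))) =
          (\<Sum>e\<in>S. P e * ln (mu n E) - P e * ln (P e) - P e * ln k)"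
      proof (intro sum.cong refl)
        fix e assume "e \<in> S"
        then have pe: "P e > 0" by (simp add: S_def)
        show "P e * ln (mu n E / (P e * k)) = P e * ln (mu n E) - P e * ln (P e) - P e * ln k"
          using pe kpos mupos by (simp add: ln_div ln_mult algebra_simps)
      qed
      also have "\<dots> = mu n E * ln (mu n E) - (\<Sum>e\<in>S. P e * ln (P e)) - mu n E * ln k"
        by (simp add: sum_subtractf sum_distrib_right[symmetric] muS)
      finally show ?thesis .
    qed
    have q: "\<forall>i\<in>{1..n}. (\<Sum>e\<in>E. if i \<in> e then P e else 0) = r * mu n E * x i"
      unfolding P_def using q_eq[OF U ev] by simp
    have b: "(\<Sum>e\<in>S. P e * ln (P e)) = r * mu n E * L"
    proof -
      have eT: "e \<subseteq> T" if "e \<in> S" for e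
      proof
        fix i assume i: "i \<in> e"
        have eE: "e \<in> E" and pe: "P e > 0" using that by (auto simp: S_def)
        have "x i \<noteq> 0"
        proof
          assume "x i = 0"
          then have "P e = 0" unfolding P_def using i fine[OF eE] by (intro prod_zero) auto
          with pe show False by simp
        qed
        then show "i \<in> T" using nn sub[OF eE] i by (force simp: T_def)
      qed
      have "(\<Sum>e\<in>S. P e * ln (P e)) = (\<Sum>e\<in>S. \<Sum>i\<in>T. if i \<in> e then P e * ln (x i) else 0)"
      proof (intro sum.cong refl)
        fix e assume e: "e \<in> S"
        have eE: "e \<in> E" and pe: "P e > 0" using e by (auto simp: S_def)
        have "ln (P e) = (\<Sum>i\<in>e. ln (x i))"
          unfolding P_def using eT[OF e] fine[OF eE] by (intro ln_prod) (auto simp: T_def)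
        then have "P e * ln (P e) = (\<Sum>i\<in>e. P e * ln (x i))" by (simp add: sum_distrib_left)
        also have "\<dots> = (\<Sum>i\<in>{i\<in>T. i \<in> e}. P e * ln (x i))"
          using eT[OF e] by (intro sum.cong) auto
        also have "\<dots> = (\<Sum>i\<in>T. if i \<in> e then P e * ln (x i) else 0)"
          by (rule sum.inter_filter) (simp add: T_def)
        finally show "P e * ln (P e) = (\<Sum>i\<in>T. if i \<in> e then P e * ln (x i) else 0)" .
      qed
      also have "\<dots> = (\<Sum>i\<in>T. \<Sum>e\<in>S. if i \<in> e then P e * ln (x i) else 0)"
        by (rule sum.swap)
      also have "\<dots> = (\<Sum>i\<in>T. ln (x i) * (r * mu n E * x i))"
      proof (intro sum.cong refl)
        fix i assume i: "i \<in> T"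
        have "(\<Sum>e\<in>S. if i \<in> e then P e * ln (x i) else 0) = ln (x i) * (\<Sum>e\<in>S. if i \<in> e then P e else 0)"
          unfolding sum_distrib_left by (intro sum.cong) auto
        also have "(\<Sum>e\<in>S. if i \<in> e then P e else 0) = (\<Sum>e\<in>E. if i \<in> e then P e else 0)"
          using Pnn fin by (intro sum.mono_neutral_left) (auto simp: S_def less_le)
        also have "\<dots> = r * mu n E * x i" using q i by (simp add: T_def)
        finally show "(\<Sum>e\<in>S. if i \<in> e then P e * ln (x i) else 0) = ln (x i) * (r * mu n E * x i)" .
      qed
      also have "\<dots> = r * mu n E * L" by (simp add: L_def sum_distrib_left algebra_simps)
      finally show ?thesis .
    qed
    have "mu n E * ln (mu n E) \<le> mu n E * (ln k + r * L)"
      using a2 a3 b by (simp add: algebra_simps)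
    then have c1: "ln (mu n E) \<le> ln k + r * L" using mupos by simp
    have lk: "ln k \<le> ln (card E)" using kpos kle by simp
    have "ln (real (card E) * sigma n x ^ r) = ln (card E) + r * L"
      using kpos kle sigpos lnsig by (simp add: ln_mult ln_realpow)
    with c1 lk have "ln (mu n E) \<le> ln (real (card E) * sigma n x ^ r)" by linarith
    then show ?thesis
      using mupos kpos kle sigpos by (subst (asm) ln_le_cancel_iff) auto
  qed
qed

end
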